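(* For every integer $k\ge1$ and real $u\ge k$, $$P_k(u)=\sum_{n_1>n_2>\cdots>n_k>0}\ \prod_{i=1}^{k}\frac{z_i^{n_i}}{n_i},\qquad z_i=1-\frac{1}{u-k+i}\quad(1\le i\le k),$$ the sum running over integers $n_1,\dots,n_k$.
   Context: The functions $P_k$ are defined by $P_0(u)=1$ for $u\ge 0$, and for integers $k\ge1$, $P_k:[k,\infty)\to\mathbb{R}$ is the function with $P_k(k)=0$ and $uP_k'(u)=P_{k-1}(u-1)$ for $u\ge k$, i.e. $P_k(u)=\int_k^u P_{k-1}(x-1)\,\frac{dx}{x}$. *)

theory Defs
  imports "HOL-Analysis.Analysis"
begin

text \<open>P 0 u = 1; P (k+1) u = integral over [k+1, u] of P k (x - 1) / x.
  Only meaningful for u \<ge> k (outside, the value is irrelevant).\<close>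
fun P :: "nat \<Rightarrow> real \<Rightarrow> real" where
  "P 0 u = 1"
| "P (Suc k) u = integral {real (Suc k)..u} (\<lambda>x. P k (x - 1) / x)"

end

theory Submission
  imports Defs
begin


fun Psi :: "nat \<Rightarrow> real \<Rightarrow> real \<Rightarrow> ennreal" where
  "Psi 0 s b = 1"
| "Psi (Suc k) s b = (\<integral>\<^sup>+v. indicator {0..b} v * ennreal (1 / (v + real (Suc k) + s)) * Psi k s v \<partial>lborel)"

lemma meas_lborel_cong: "f \<in> borel_measurable (M \<Otimes>\<^sub>M borel) \<Longrightarrow> f \<in> borel_measurable (M \<Otimes>\<^sub>M lborel)"
  by (simp add: measurable_cong_sets[OF sets_pair_measure_cong[OF refl sets_lborel] refl])

lemma ind_Icc: "indicator {a..b} (x::real) = (if a \<le> x \<and> x \<le> b then 1 else (0::ennreal))"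
  by (simp add: indicator_def)

lemma Psi_meas: "(\<lambda>p. Psi k (fst p) (snd p)) \<in> borel_measurable (borel \<Otimes>\<^sub>M borel)"
proof (induction k)
  case 0 show ?case by simp
next
  case (Suc k)
  have IH: "(\<lambda>x. Psi k (fst (fst x)) (snd x)) \<in> borel_measurable ((borel \<Otimes>\<^sub>M borel) \<Otimes>\<^sub>M borel)"
  proof -
    have "(\<lambda>x. (fst (fst x), snd x)) \<in> measurable ((borel \<Otimes>\<^sub>M borel) \<Otimes>\<^sub>M borel) (borel \<Otimes>\<^sub>M borel)"
      by measurable
    from measurable_compose[OF this Suc] show ?thesis by simp
  qed
  have "(\<lambda>(p, v). indicator {0..snd p} v * ennreal (1 / (v + real (Suc k) + fst p)) * Psi k (fst p) v)
     \<in> borel_measurable ((borel \<Otimes>\<^sub>M borel) \<Otimes>\<^sub>M lborel)"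
    apply (rule meas_lborel_cong)
    using IH unfolding split_beta' ind_Icc by measurable
  from lborel.borel_measurable_nn_integral[OF this] show ?case by simp
qed

lemma Psi_meas'[measurable (raw)]:
  "f \<in> borel_measurable M \<Longrightarrow> g \<in> borel_measurable M \<Longrightarrow> (\<lambda>x. Psi k (f x) (g x)) \<in> borel_measurable M"
  using measurable_compose[OF measurable_Pair[of f M borel g borel] Psi_meas] by simp

lemma meas2: "f \<in> borel_measurable (borel \<Otimes>\<^sub>M borel) \<Longrightarrow> f \<in> borel_measurable (lborel \<Otimes>\<^sub>M lborel)"
  by (simp add: measurable_cong_sets[OF sets_pair_measure_cong[OF sets_lborel sets_lborel] refl])

lemma Psi_bound: "s \<ge> 0 \<Longrightarrow> Psi k s b \<le> ennreal (\<bar>b\<bar> ^ k)"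
proof (induction k arbitrary: b)
  case 0 then show ?case by simp
next
  case (Suc k)
  have "Psi (Suc k) s b \<le> (\<integral>\<^sup>+v. ennreal (\<bar>b\<bar> ^ k) * indicator {0..b} v \<partial>lborel)"
    unfolding Psi.simps
  proof (rule nn_integral_mono)
    fix v
    show "indicator {0..b} v * ennreal (1 / (v + real (Suc k) + s)) * Psi k s v
          \<le> ennreal (\<bar>b\<bar> ^ k) * indicator {0..b} v"
    proof (cases "v \<in> {0..b}")
      case True
      have a: "ennreal (1 / (v + real (Suc k) + s)) \<le> 1"
        using True Suc.prems by (auto simp: ennreal_le_1 divide_le_eq_1)
      have "Psi k s v \<le> ennreal (\<bar>v\<bar> ^ k)" using Suc by auto
      also have "\<dots> \<le> ennreal (\<bar>b\<bar> ^ k)" using True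
        by (intro ennreal_leI power_mono) auto
      finally have b: "Psi k s v \<le> ennreal (\<bar>b\<bar> ^ k)" .
      have "ennreal (1 / (v + real (Suc k) + s)) * Psi k s v \<le> 1 * ennreal (\<bar>b\<bar> ^ k)"
        by (intro mult_mono a b) auto
      then show ?thesis using True by simp
    qed simp
  qed
  also have "\<dots> = ennreal (\<bar>b\<bar> ^ k) * emeasure lborel {0..b}"
    by (simp add: nn_integral_cmult_indicator)
  also have "\<dots> \<le> ennreal (\<bar>b\<bar> ^ Suc k)"
  proof (cases "0 \<le> b")
    case True then show ?thesis by (simp add: ennreal_mult'[symmetric] mult.commute)
  next
    case False then show ?thesis by simp
  qed
  finally show ?case .
qed

lemma Psi_first: "Psi (Suc k) s b =
   (\<integral>\<^sup>+v. indicator {0..b} v * ennreal (1/(v+1+s)) * Psi k (s+v+1) (b-v) \<partial>lborel)"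
proof (induction k arbitrary: s b)
  case 0 then show ?case by (simp add: add.commute add.left_commute)
next
  case (Suc k)
  have "Psi (Suc (Suc k)) s b = (\<integral>\<^sup>+x. indicator {0..b} x * ennreal (1 / (x + real (Suc (Suc k)) + s)) * Psi (Suc k) s x \<partial>lborel)"
    by simp
  also have "\<dots> = (\<integral>\<^sup>+x. \<integral>\<^sup>+v. indicator {0..b} x * ennreal (1 / (x + real (Suc (Suc k)) + s)) *
          (indicator {0..x} v * ennreal (1/(v+1+s)) * Psi k (s+v+1) (x-v)) \<partial>lborel \<partial>lborel)"
    apply (subst Suc.IH)
    apply (rule nn_integral_cong)
    apply (rule nn_integral_cmult[symmetric])
    unfolding ind_Icc by measurable
  also have "\<dots> = (\<integral>\<^sup>+v. \<integral>\<^sup>+x. indicator {0..b} x * ennreal (1 / (x + real (Suc (Suc k)) + s)) *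
          (indicator {0..x} v * ennreal (1/(v+1+s)) * Psi k (s+v+1) (x-v)) \<partial>lborel \<partial>lborel)"
    apply (rule lborel_pair.Fubini'[symmetric])
    apply (rule meas2)
    unfolding ind_Icc split_beta' by measurable
  also have "\<dots> = (\<integral>\<^sup>+v. indicator {0..b} v * ennreal (1/(v+1+s)) *
          (\<integral>\<^sup>+x. indicator {v..b} x * ennreal (1 / (x + real (Suc (Suc k)) + s)) * Psi k (s+v+1) (x-v) \<partial>lborel) \<partial>lborel)"
    apply (rule nn_integral_cong)
    apply (subst nn_integral_cmult[symmetric])
    subgoal unfolding ind_Icc by measurable
    apply (rule nn_integral_cong)
    apply (auto simp: indicator_def mult_ac)
    done
  also have "\<dots> = (\<integral>\<^sup>+v. indicator {0..b} v * ennreal (1/(v+1+s)) * Psi (Suc k) (s+v+1) (b-v) \<partial>lborel)"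
  proof (rule nn_integral_cong)
    fix v
    have "(\<integral>\<^sup>+x. indicator {v..b} x * ennreal (1 / (x + real (Suc (Suc k)) + s)) * Psi k (s+v+1) (x-v) \<partial>lborel)
       = ennreal \<bar>1::real\<bar> * (\<integral>\<^sup>+r. indicator {v..b} (v + 1 * r) * ennreal (1 / ((v + 1 * r) + real (Suc (Suc k)) + s)) * Psi k (s+v+1) ((v + 1 * r)-v) \<partial>lborel)"
      by (rule nn_integral_real_affine[where c=1 and t=v]) (unfold ind_Icc, measurable)
    also have "\<dots> = Psi (Suc k) (s+v+1) (b-v)"
      unfolding Psi.simps
      by (simp, rule nn_integral_cong) (auto simp: indicator_def algebra_simps)
    finally show "indicator {0..b} v * ennreal (1/(v+1+s)) *
          (\<integral>\<^sup>+x. indicator {v..b} x * ennreal (1 / (x + real (Suc (Suc k)) + s)) * Psi k (s+v+1) (x-v) \<partial>lborel)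
       = indicator {0..b} v * ennreal (1/(v+1+s)) * Psi (Suc k) (s+v+1) (b-v)" by simp
  qed
  finally show ?case .
qed

lemma minus_add_eq_plus1: "- real (Suc k) + 1 * (x::real) = x - real (Suc k)" by simp

lemma Psi_fin: "s \<ge> 0 \<Longrightarrow> Psi k s b = ennreal (enn2real (Psi k s b))"
proof -
  assume "s \<ge> 0"
  from Psi_bound[OF this, of k b] have "Psi k s b < top"
    using order.strict_trans1 by fastforce
  then show ?thesis by simp
qed

lemma Psi_P: "w \<ge> 0 \<Longrightarrow> Psi k 0 w = ennreal (P k (w + real k)) \<and> P k (w + real k) \<ge> 0"
proof (induction k arbitrary: w)
  case 0 then show ?case by simp
next
  case (Suc k)
  define h where "h x = indicator {real (Suc k)..w + real (Suc k)} x * (enn2real (Psi k 0 (x - real (Suc k))) / x)" for x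
  have hm: "h \<in> borel_measurable borel" unfolding h_def by measurable
  have hnn: "h x \<ge> 0" for x unfolding h_def by (auto simp: indicator_def)
  have "Psi (Suc k) 0 w = ennreal \<bar>1::real\<bar> * (\<integral>\<^sup>+x. indicator {0..w} (- real (Suc k) + 1 * x) *
      ennreal (1 / ((- real (Suc k) + 1 * x) + real (Suc k) + 0)) * Psi k 0 (- real (Suc k) + 1 * x) \<partial>lborel)"
    unfolding Psi.simps
    by (rule nn_integral_real_affine[where c=1 and t="- real (Suc k)"]) (unfold ind_Icc, measurable)
  also have "\<dots> = (\<integral>\<^sup>+x. ennreal (h x) \<partial>lborel)"
  proof -
    have pt: "indicator {0..w} (- real (Suc k) + 1 * x) *
      ennreal (1 / ((- real (Suc k) + 1 * x) + real (Suc k) + 0)) * Psi k 0 (- real (Suc k) + 1 * x) = ennreal (h x)" for x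
    proof -
      have e1: "- real (Suc k) + 1 * x = x - real (Suc k)" by simp
      have e2: "(x - real (Suc k)) + real (Suc k) + 0 = x" by simp
      have "indicator {0..w} (x - real (Suc k)) * ennreal (1 / x) * Psi k 0 (x - real (Suc k)) = ennreal (h x)"
      proof (cases "x \<in> {real (Suc k)..w + real (Suc k)}")
        case True
        then have x0: "x > 0" by auto
        have i1: "indicator {0..w} (x - real (Suc k)) = (1::ennreal)" using True by (simp add: indicator_def)
        have hx: "h x = enn2real (Psi k 0 (x - real (Suc k))) / x" using True by (simp add: h_def)
        have "ennreal (1 / x) * Psi k 0 (x - real (Suc k)) = ennreal (1/x) * ennreal (enn2real (Psi k 0 (x - real (Suc k))))"
          by (subst Psi_fin[of 0]) simp_all
        also have "\<dots> = ennreal (h x)" unfolding hx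
          using x0 by (subst ennreal_mult'[symmetric]) (simp_all add: divide_inverse mult.commute)
        finally show ?thesis by (simp only: i1 mult.left_neutral)
      next
        case False
        then have "indicator {0..w} (x - real (Suc k)) = (0::ennreal)" "h x = 0"
          by (auto simp: h_def indicator_def)
        then show ?thesis by simp
      qed
      then show ?thesis unfolding e1 e2 .
    qed
    show ?thesis by (simp only: pt) simp
  qed
  finally have eq1: "Psi (Suc k) 0 w = (\<integral>\<^sup>+x. ennreal (h x) \<partial>lborel)" .
  define r where "r = enn2real (Psi (Suc k) 0 w)"
  have r0: "r \<ge> 0" unfolding r_def by simp
  have eq2: "(\<integral>\<^sup>+x. ennreal (h x) \<partial>lborel) = ennreal r"
    using eq1 Psi_fin[of 0 "Suc k" w] r_def by simp
  have hi: "(h has_integral r) UNIV"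
    by (rule nn_integral_has_integral[OF hm hnn eq2 r0])
  have hx: "h = (\<lambda>x. if x \<in> {real (Suc k)..w + real (Suc k)} then enn2real (Psi k 0 (x - real (Suc k))) / x else 0)"
    by (rule ext) (simp add: h_def indicator_def)
  have "((\<lambda>x. if x \<in> {real (Suc k)..w + real (Suc k)} then enn2real (Psi k 0 (x - real (Suc k))) / x else 0) has_integral r) UNIV"
    using hi unfolding hx .
  then have "((\<lambda>x. enn2real (Psi k 0 (x - real (Suc k))) / x) has_integral r) {real (Suc k)..w + real (Suc k)}"
    by (rule has_integral_restrict_UNIV[THEN iffD1])
  then have "((\<lambda>x. P k (x - 1) / x) has_integral r) {real (Suc k)..w + real (Suc k)}"
  proof (rule has_integral_eq[rotated])
    fix x assume x: "x \<in> {real (Suc k)..w + real (Suc k)}"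
    then have "Psi k 0 (x - real (Suc k)) = ennreal (P k (x - real (Suc k) + real k)) \<and> P k (x - real (Suc k) + real k) \<ge> 0"
      by (intro Suc.IH) auto
    moreover have "x - real (Suc k) + real k = x - 1" by simp
    ultimately show "enn2real (Psi k 0 (x - real (Suc k))) / x = P k (x - 1) / x" by simp
  qed
  then have "P (Suc k) (w + real (Suc k)) = r"
    by (simp add: integral_unique)
  then show ?case using eq1 eq2 r0 by simp
qed



definition Dec :: "nat \<Rightarrow> nat list set" where
  "Dec k = {ns. length ns = k \<and> sorted_wrt (>) ns \<and> (\<forall>n\<in>set ns. n > 0)}"

fun W :: "(nat \<Rightarrow> real) \<Rightarrow> nat list \<Rightarrow> real" where
  "W z [] = 1"
| "W z (n # ns) = z 0 ^ n / real n * W (\<lambda>i. z (Suc i)) ns"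

definition mh :: "nat list \<Rightarrow> nat" where
  "mh ns = (case ns of [] \<Rightarrow> 0 | n # _ \<Rightarrow> n)"

definition Ser :: "nat \<Rightarrow> (nat \<Rightarrow> real) \<Rightarrow> ennreal" where
  "Ser k z = (\<integral>\<^sup>+ns. ennreal (W z ns) \<partial>count_space (Dec k))"

definition zs :: "(nat \<Rightarrow> real) \<Rightarrow> real \<Rightarrow> nat \<Rightarrow> real" where
  "zs z t = (\<lambda>i. if i = 0 then t * z 0 * z 1 else z (Suc i))"

lemma W_nonneg: "(\<And>i. z i \<ge> 0) \<Longrightarrow> W z ns \<ge> 0"
  by (induction ns arbitrary: z) auto

lemma Dec_0: "Dec 0 = {[]}"
  by (auto simp: Dec_def)

lemma mh_max: "sorted_wrt (>) ns \<Longrightarrow> x \<in> set ns \<Longrightarrow> x \<le> mh ns"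
  by (cases ns) (auto simp: mh_def)

lemma Dec_Suc: "bij_betw (\<lambda>(ns, n). n # ns) (SIGMA ns:Dec k. {mh ns<..}) (Dec (Suc k))"
proof (rule bij_betwI')
  show "\<And>x y. x \<in> (SIGMA ns:Dec k. {mh ns<..}) \<Longrightarrow> y \<in> (SIGMA ns:Dec k. {mh ns<..}) \<Longrightarrow>
      ((case x of (ns, n) \<Rightarrow> n # ns) = (case y of (ns, n) \<Rightarrow> n # ns)) = (x = y)"
    by auto
  show "(case x of (ns, n) \<Rightarrow> n # ns) \<in> Dec (Suc k)" if "x \<in> (SIGMA ns:Dec k. {mh ns<..})" for x
    using that mh_max[of "fst x"] by (force simp: Dec_def)
  show "\<exists>x\<in>SIGMA ns:Dec k. {mh ns<..}. y = (case x of (ns, n) \<Rightarrow> n # ns)" if y: "y \<in> Dec (Suc k)" for y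
  proof -
    from y obtain n ns where yn: "y = n # ns" by (cases y) (auto simp: Dec_def)
    have "ns \<in> Dec k" using y yn by (auto simp: Dec_def)
    moreover have "mh ns < n" using y yn by (cases ns) (auto simp: Dec_def mh_def)
    ultimately show ?thesis using yn by auto
  qed
qed

lemma nn_integral_count_space_Sigma:
  fixes f :: "'a \<times> 'b \<Rightarrow> ennreal"
  shows "(\<integral>\<^sup>+p. f p \<partial>count_space (Sigma A B)) = (\<integral>\<^sup>+a. \<integral>\<^sup>+b. f (a, b) \<partial>count_space (B a) \<partial>count_space A)"
proof -
  have "(\<integral>\<^sup>+p. f p \<partial>count_space (Sigma A B)) = (\<integral>\<^sup>+p. f p * indicator (Sigma A B) p \<partial>count_space UNIV)"
    by (rule nn_integral_count_space_indicator) simp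
  also have "\<dots> = (\<integral>\<^sup>+a. \<integral>\<^sup>+b. f (a, b) * indicator (Sigma A B) (a, b) \<partial>count_space UNIV \<partial>count_space UNIV)"
    by (rule nn_integral_fst_count_space[symmetric])
  also have "\<dots> = (\<integral>\<^sup>+a. (\<integral>\<^sup>+b. f (a, b) * indicator (B a) b \<partial>count_space UNIV) * indicator A a \<partial>count_space UNIV)"
    by (rule nn_integral_cong, subst nn_integral_multc[symmetric]) (auto simp: indicator_def intro!: nn_integral_cong)
  also have "\<dots> = (\<integral>\<^sup>+a. \<integral>\<^sup>+b. f (a, b) \<partial>count_space (B a) \<partial>count_space A)"
    by (subst (2) nn_integral_count_space_indicator) (auto simp: nn_integral_count_space_indicator)
  finally show ?thesis .
qed

lemma W_peel: "W (\<lambda>i. z (Suc i)) ns * (z 0 * t) ^ mh ns = W (zs z t) ns"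
proof (cases ns)
  case Nil then show ?thesis by (simp add: mh_def)
next
  case (Cons a r)
  have "(\<lambda>i. zs z t (Suc i)) = (\<lambda>i. z (Suc (Suc i)))" by (simp add: zs_def)
  then show ?thesis using Cons by (simp add: mh_def zs_def power_mult_distrib mult_ac)
qed

lemma int_pow: "c \<ge> 0 \<Longrightarrow> (\<integral>\<^sup>+t. indicator {0..1} t * ennreal (c * t ^ p) \<partial>lborel) = ennreal (c / real (Suc p))"
proof -
  assume c: "c \<ge> 0"
  have "((\<lambda>t. c * t ^ p) has_integral (c / real (Suc p) * 1 ^ Suc p - c / real (Suc p) * 0 ^ Suc p)) {0..1::real}"
  proof (rule fundamental_theorem_of_calculus)
    show "0 \<le> (1::real)" by simp
    fix x :: real
    have "((\<lambda>t. c / real (Suc p) * t ^ Suc p) has_real_derivative c * x ^ p) (at x within {0..1})"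
      by (rule DERIV_cong[OF DERIV_cmult[OF DERIV_pow]]) simp
    then show "((\<lambda>t. c / real (Suc p) * t ^ Suc p) has_vector_derivative c * x ^ p) (at x within {0..1})"
      by (simp add: has_real_derivative_iff_has_vector_derivative)
  qed
  then have "((\<lambda>t. c * t ^ p) has_integral (c / real (Suc p))) {0..1::real}" by simp
  from nn_integral_has_integral_lebesgue'[OF _ this] c
  show ?thesis by (simp add: mult.commute)
qed

lemma geom_int:
  assumes a: "0 \<le> a" "a < 1"
  shows "(\<integral>\<^sup>+n. ennreal (a ^ n / real n) \<partial>count_space {m<..}) =
         (\<integral>\<^sup>+t. indicator {0..1} t * ennreal (a ^ Suc m * t ^ m / (1 - a * t)) \<partial>lborel)"
proof -
  have bij: "bij_betw (\<lambda>j. j + Suc m) UNIV {m<..}"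
    by (rule bij_betwI[where g="\<lambda>n. n - Suc m"]) auto
  have "(\<integral>\<^sup>+n. ennreal (a ^ n / real n) \<partial>count_space {m<..}) =
        (\<integral>\<^sup>+j. ennreal (a ^ (j + Suc m) / real (j + Suc m)) \<partial>count_space UNIV)"
    by (rule nn_integral_bij_count_space[OF bij, symmetric])
  also have "\<dots> = (\<Sum>j. ennreal (a ^ (j + Suc m) / real (j + Suc m)))"
    by (rule nn_integral_count_space_nat)
  also have "\<dots> = (\<Sum>j. \<integral>\<^sup>+t. indicator {0..1} t * ennreal (a ^ (j + Suc m) * t ^ (j + m)) \<partial>lborel)"
    using a by (subst int_pow) auto
  also have "\<dots> = (\<integral>\<^sup>+t. (\<Sum>j. indicator {0..1} t * ennreal (a ^ (j + Suc m) * t ^ (j + m))) \<partial>lborel)"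
    by (rule nn_integral_suminf[symmetric]) (unfold ind_Icc, measurable)
  also have "\<dots> = (\<integral>\<^sup>+t. indicator {0..1} t * ennreal (a ^ Suc m * t ^ m / (1 - a * t)) \<partial>lborel)"
  proof (rule nn_integral_cong)
    fix t :: real
    show "(\<Sum>j. indicator {0..1} t * ennreal (a ^ (j + Suc m) * t ^ (j + m))) =
          indicator {0..1} t * ennreal (a ^ Suc m * t ^ m / (1 - a * t))"
    proof (cases "t \<in> {0..1}")
      case True
      then have t: "0 \<le> t" "t \<le> 1" by auto
      have at: "a * t < 1" using a t
        by (metis mult_less_cancel_right2 le_less_trans mult_right_le_one_le order.strict_iff_not)
      have "norm (a * t) < 1" using a t at by simp
      then have "(\<lambda>j. (a * t) ^ j) sums (1 / (1 - a * t))" by (rule geometric_sums)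
      from sums_mult[OF this, of "a ^ Suc m * t ^ m"]
      have "(\<lambda>j. a ^ (j + Suc m) * t ^ (j + m)) sums (a ^ Suc m * t ^ m / (1 - a * t))"
        by (simp add: power_add power_mult_distrib mult_ac)
      then have "(\<Sum>j. ennreal (a ^ (j + Suc m) * t ^ (j + m))) = ennreal (a ^ Suc m * t ^ m / (1 - a * t))"
        using a t by (subst suminf_ennreal2) (auto simp: sums_iff)
      then show ?thesis using True by simp
    qed simp
  qed
  finally show ?thesis .
qed



lemma countable_Dec: "countable (Dec k)"
  by (rule countable_subset[OF subset_UNIV]) simp

lemma Ser_Suc:
  assumes z0: "\<And>i. 0 \<le> z i" and z1: "\<And>i. z i < 1"
  shows "Ser (Suc k) z = (\<integral>\<^sup>+t. indicator {0..1} t * ennreal (z 0 / (1 - z 0 * t)) * Ser k (zs z t) \<partial>lborel)"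
proof -
  let ?z' = "\<lambda>i. z (Suc i)"
  have W0: "W ?z' ns \<ge> 0" for ns by (rule W_nonneg) (simp add: z0)
  have "Ser (Suc k) z = (\<integral>\<^sup>+p. ennreal (W z ((\<lambda>(ns, n). n # ns) p)) \<partial>count_space (SIGMA ns:Dec k. {mh ns<..}))"
    unfolding Ser_def by (rule nn_integral_bij_count_space[OF Dec_Suc, symmetric])
  also have "\<dots> = (\<integral>\<^sup>+ns. \<integral>\<^sup>+n. ennreal (W z (n # ns)) \<partial>count_space {mh ns<..} \<partial>count_space (Dec k))"
    by (subst nn_integral_count_space_Sigma) simp
  also have "\<dots> = (\<integral>\<^sup>+ns. ennreal (W ?z' ns) * (\<integral>\<^sup>+n. ennreal (z 0 ^ n / real n) \<partial>count_space {mh ns<..}) \<partial>count_space (Dec k))"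
    apply (rule nn_integral_cong)
    apply (subst nn_integral_cmult[symmetric])
     apply simp
    apply (rule nn_integral_cong)
    subgoal for ns n
      using ennreal_mult'[OF W0[of ns], of "z 0 ^ n / real n"] by (simp add: mult.commute)
    done
  also have "\<dots> = (\<integral>\<^sup>+ns. ennreal (W ?z' ns) * (\<integral>\<^sup>+t. indicator {0..1} t * ennreal (z 0 ^ Suc (mh ns) * t ^ (mh ns) / (1 - z 0 * t)) \<partial>lborel) \<partial>count_space (Dec k))"
    using z0 z1 by (simp add: geom_int)
  also have "\<dots> = (\<integral>\<^sup>+ns. \<integral>\<^sup>+t. indicator {0..1} t * ennreal (z 0 / (1 - z 0 * t)) * ennreal (W ?z' ns * (z 0 * t) ^ mh ns) \<partial>lborel \<partial>count_space (Dec k))"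
  proof (rule nn_integral_cong)
    fix ns
    show "ennreal (W ?z' ns) * (\<integral>\<^sup>+t. indicator {0..1} t * ennreal (z 0 ^ Suc (mh ns) * t ^ (mh ns) / (1 - z 0 * t)) \<partial>lborel)
       = (\<integral>\<^sup>+t. indicator {0..1} t * ennreal (z 0 / (1 - z 0 * t)) * ennreal (W ?z' ns * (z 0 * t) ^ mh ns) \<partial>lborel)"
      apply (subst nn_integral_cmult[symmetric])
      subgoal unfolding ind_Icc by measurable
      apply (rule nn_integral_cong)
      subgoal for t
      proof (cases "t \<in> {0..1}")
        case True
        then have t: "0 \<le> t" "t \<le> 1" by auto
        have "z 0 * t < 1" using z0[of 0] z1[of 0] t
          by (metis mult_less_cancel_right2 le_less_trans mult_right_le_one_le order.strict_iff_not)
        then have d: "1 - z 0 * t > 0" by simp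
        have "ennreal (W ?z' ns) * ennreal (z 0 ^ Suc (mh ns) * t ^ (mh ns) / (1 - z 0 * t))
            = ennreal (W ?z' ns * (z 0 ^ Suc (mh ns) * t ^ (mh ns) / (1 - z 0 * t)))"
          using W0 z0 t d by (subst ennreal_mult'') auto
        also have "\<dots> = ennreal (z 0 / (1 - z 0 * t) * (W ?z' ns * (z 0 * t) ^ mh ns))"
          by (simp add: power_mult_distrib field_simps)
        also have "\<dots> = ennreal (z 0 / (1 - z 0 * t)) * ennreal (W ?z' ns * (z 0 * t) ^ mh ns)"
          using W0 z0 t d by (subst ennreal_mult'') auto
        finally show ?thesis using True by (simp add: mult_ac)
      qed simp
      done
  qed
  also have "\<dots> = (\<integral>\<^sup>+t. \<integral>\<^sup>+ns. indicator {0..1} t * ennreal (z 0 / (1 - z 0 * t)) * ennreal (W ?z' ns * (z 0 * t) ^ mh ns) \<partial>count_space (Dec k) \<partial>lborel)"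
    by (rule nn_integral_count_space_nn_integral[symmetric, OF countable_Dec]) (unfold ind_Icc, measurable)
  also have "\<dots> = (\<integral>\<^sup>+t. indicator {0..1} t * ennreal (z 0 / (1 - z 0 * t)) * Ser k (zs z t) \<partial>lborel)"
    unfolding Ser_def W_peel
    by (rule nn_integral_cong, subst nn_integral_cmult) simp_all
  finally show ?thesis .
qed

definition zf :: "real \<Rightarrow> real \<Rightarrow> nat \<Rightarrow> real" where
  "zf s b i = (if i = 0 then b / (b + 1 + s) else (b + real i + s) / (b + real i + 1 + s))"

lemma zf_ge: "s \<ge> 0 \<Longrightarrow> b \<ge> 0 \<Longrightarrow> 0 \<le> zf s b i"
  by (simp add: zf_def)

lemma zf_less: "s \<ge> 0 \<Longrightarrow> b \<ge> 0 \<Longrightarrow> zf s b i < 1"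
  by (simp add: zf_def)

lemma aux_cancel: "(X::real) \<noteq> 0 \<Longrightarrow> t * (b / X) * (X / Y) = b * t / Y"
  by (simp add: field_simps)

lemma aux2: "(X::real) \<noteq> 0 \<Longrightarrow> (b / X) / (1 - b / X * t) = b / (X - b * t)"
proof -
  assume X: "X \<noteq> 0"
  have "1 - b / X * t = (X - b * t) / X" using X by (simp add: field_simps)
  then show ?thesis using X by simp
qed

lemma zs_zf:
  assumes "s \<ge> 0" "b > 0" "0 \<le> t" "t \<le> 1"
  shows "zs (zf s b) t = zf (s + b - b * t + 1) (b * t)"
proof
  fix i
  show "zs (zf s b) t i = zf (s + b - b * t + 1) (b * t) i"
  proof (cases i)
    case 0
    have p: "b + 1 + s > 0" "b + 2 + s > 0" using assms by auto
    have "zs (zf s b) t 0 = t * (b / (b + 1 + s)) * ((b + 1 + s) / (b + 1 + 1 + s))"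
      by (simp add: zs_def zf_def)
    also have "\<dots> = b * t / (b + 1 + 1 + s)" using p by (intro aux_cancel) simp
    also have "\<dots> = b * t / (b + 2 + s)" by simp
    also have "\<dots> = zf (s + b - b * t + 1) (b * t) 0"
    proof -
      have "b * t + 1 + (s + b - b * t + 1) = b + 2 + s" by simp
      then show ?thesis by (simp add: zf_def)
    qed
    finally show ?thesis using 0 by simp
  next
    case (Suc j)
    then show ?thesis by (simp add: zs_def zf_def algebra_simps)
  qed
qed

lemma Ser_0: "Ser 0 z = 1"
  by (simp add: Ser_def Dec_0 nn_integral_count_space_finite)

lemma Ser_Psi: "s \<ge> 0 \<Longrightarrow> b \<ge> 0 \<Longrightarrow> Ser k (zf s b) = Psi k s b"
proof (induction k arbitrary: s b)
  case 0 then show ?case by (simp add: Ser_0)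
next
  case (Suc k)
  have Sfirst: "Ser (Suc k) (zf s b) = (\<integral>\<^sup>+t. indicator {0..1} t * ennreal (zf s b 0 / (1 - zf s b 0 * t)) * Ser k (zs (zf s b) t) \<partial>lborel)"
    by (rule Ser_Suc) (use Suc.prems zf_ge zf_less in auto)
  show ?case
  proof (cases "b = 0")
    case True
    have l: "Ser (Suc k) (zf s b) = 0" unfolding Sfirst using True by (simp add: zf_def)
    have "Psi (Suc k) s b \<le> 0"
      using Psi_bound[OF Suc.prems(1), of "Suc k" b] True by simp
    then show ?thesis using l by simp
  next
    case False
    then have b: "b > 0" using Suc.prems by simp
    have "Ser (Suc k) (zf s b) = (\<integral>\<^sup>+t. indicator {0..1} t * ennreal (b / (b - b * t + 1 + s)) * Psi k (s + b - b * t + 1) (b * t) \<partial>lborel)"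
      unfolding Sfirst
    proof (rule nn_integral_cong)
      fix t :: real
      show "indicator {0..1} t * ennreal (zf s b 0 / (1 - zf s b 0 * t)) * Ser k (zs (zf s b) t) =
            indicator {0..1} t * ennreal (b / (b - b * t + 1 + s)) * Psi k (s + b - b * t + 1) (b * t)"
      proof (cases "t \<in> {0..1}")
        case True
        then have t: "0 \<le> t" "t \<le> 1" by auto
        have p1: "b + 1 + s > 0" using b Suc.prems by simp
        have "zf s b 0 / (1 - zf s b 0 * t) = b / (b + 1 + s - b * t)"
        proof -
          have "zf s b 0 = b / (b + 1 + s)" by (simp add: zf_def)
          then show ?thesis by (simp only:) (rule aux2, use p1 in simp)
        qed
        also have "b + 1 + s - b * t = b - b * t + 1 + s" by simp
        finally have "zf s b 0 / (1 - zf s b 0 * t) = b / (b - b * t + 1 + s)" .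
        moreover have "Ser k (zs (zf s b) t) = Psi k (s + b - b * t + 1) (b * t)"
        proof -
          have bt: "b * t \<le> b" using t b by (simp add: mult_left_le)
          have "0 \<le> b * t" using t b by simp
          have e: "zs (zf s b) t = zf (s + b - b * t + 1) (b * t)"
            by (rule zs_zf) (use t b Suc.prems in auto)
          have "0 \<le> s + b - b * t + 1" using bt Suc.prems by linarith
          then show ?thesis unfolding e using \<open>0 \<le> b * t\<close> by (rule Suc.IH)
        qed
        ultimately show ?thesis by simp
      qed simp
    qed
    also have "\<dots> = Psi (Suc k) s b"
    proof -
      have "Psi (Suc k) s b = ennreal \<bar>- b\<bar> * (\<integral>\<^sup>+t. indicator {0..b} (b + - b * t) * ennreal (1/((b + - b * t)+1+s)) *
             Psi k (s+(b + - b * t)+1) (b-(b + - b * t)) \<partial>lborel)"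
        unfolding Psi_first
        by (rule nn_integral_real_affine[where c="-b" and t=b]) (use b in \<open>unfold ind_Icc, measurable\<close>)
      also have "\<dots> = (\<integral>\<^sup>+t. ennreal b * (indicator {0..b} (b + - b * t) * ennreal (1/((b + - b * t)+1+s)) *
             Psi k (s+(b + - b * t)+1) (b-(b + - b * t))) \<partial>lborel)"
      proof -
        have m: "(\<lambda>t. indicator {0..b} (b + - b * t) * ennreal (1/((b + - b * t)+1+s)) *
             Psi k (s+(b + - b * t)+1) (b-(b + - b * t))) \<in> borel_measurable lborel"
          unfolding ind_Icc by measurable
        have "ennreal \<bar>- b\<bar> = ennreal b" using b by simp
        then show ?thesis by (simp only: nn_integral_cmult[OF m])
      qed
      also have "\<dots> = (\<integral>\<^sup>+t. indicator {0..1} t * ennreal (b / (b - b * t + 1 + s)) * Psi k (s + b - b * t + 1) (b * t) \<partial>lborel)"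
      proof (rule nn_integral_cong)
        fix t :: real
        have i1: "0 \<le> b + - b * t \<longleftrightarrow> t \<le> 1"
        proof -
          have "0 \<le> b + - b * t \<longleftrightarrow> b * t \<le> b * 1" by simp
          also have "\<dots> \<longleftrightarrow> t \<le> 1" using b by (rule mult_le_cancel_left_pos)
          finally show ?thesis .
        qed
        have i2: "b + - b * t \<le> b \<longleftrightarrow> 0 \<le> t"
        proof -
          have "b + - b * t \<le> b \<longleftrightarrow> b * 0 \<le> b * t" by simp
          also have "\<dots> \<longleftrightarrow> 0 \<le> t" using b by (rule mult_le_cancel_left_pos)
          finally show ?thesis .
        qed
        have ind: "indicator {0..b} (b + - b * t) = (indicator {0..1} t :: ennreal)"
          unfolding indicator_def atLeastAtMost_iff i1 i2 by (simp add: conj_commute)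
        have e1: "s+(b + - b * t)+1 = s + b - b * t + 1" "b-(b + - b * t) = b * t" "(b + - b * t)+1+s = b - b * t + 1 + s"
          by simp_all
        show "ennreal b * (indicator {0..b} (b + - b * t) * ennreal (1/((b + - b * t)+1+s)) *
             Psi k (s+(b + - b * t)+1) (b-(b + - b * t))) =
             indicator {0..1} t * ennreal (b / (b - b * t + 1 + s)) * Psi k (s + b - b * t + 1) (b * t)"
          unfolding ind e1
        proof (cases "t \<in> {0..1}")
          case True
          then have "t \<le> 1" by simp
          then have "b * t \<le> b * 1" using b by (intro mult_left_mono) auto
          then have pos: "b - b * t + 1 + s > 0" using Suc.prems by linarith
          have "ennreal b * ennreal (1 / (b - b * t + 1 + s)) = ennreal (b * (1 / (b - b * t + 1 + s)))"
            using pos by (intro ennreal_mult''[symmetric]) simp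
          also have "b * (1 / (b - b * t + 1 + s)) = b / (b - b * t + 1 + s)" by simp
          finally have eb: "ennreal b * ennreal (1 / (b - b * t + 1 + s)) = ennreal (b / (b - b * t + 1 + s))" .
          have "indicator {0..1} t = (1::ennreal)" using True by simp
          then show "ennreal b * (indicator {0..1} t * ennreal (1 / (b - b * t + 1 + s)) * Psi k (s + b - b * t + 1) (b * t)) =
             indicator {0..1} t * ennreal (b / (b - b * t + 1 + s)) * Psi k (s + b - b * t + 1) (b * t)"
            by (simp only: mult_1 mult.left_neutral flip: eb) (simp only: mult.assoc)
        next
          case False
          then have "indicator {0..1} t = (0::ennreal)" by simp
          then show "ennreal b * (indicator {0..1} t * ennreal (1 / (b - b * t + 1 + s)) * Psi k (s + b - b * t + 1) (b * t)) =
             indicator {0..1} t * ennreal (b / (b - b * t + 1 + s)) * Psi k (s + b - b * t + 1) (b * t)"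
            by simp
        qed
      qed
      finally show ?thesis by simp
    qed
    finally show ?thesis .
  qed
qed



lemma bridge:
  fixes f :: "'a \<Rightarrow> real"
  assumes cA: "countable A" and f0: "\<And>x. x \<in> A \<Longrightarrow> f x \<ge> 0" and r0: "r \<ge> 0"
    and I: "(\<integral>\<^sup>+x. ennreal (f x) \<partial>count_space A) = ennreal r"
  shows "(f has_sum r) A"
proof -
  have le: "sum f F \<le> r" if F: "finite F" "F \<subseteq> A" for F
  proof -
    have "ennreal (sum f F) = (\<integral>\<^sup>+x. ennreal (f x) \<partial>count_space F)"
      using F f0 by (simp add: nn_integral_count_space_finite subset_iff)
    also have "\<dots> \<le> (\<integral>\<^sup>+x. ennreal (f x) \<partial>count_space A)"
      apply (simp add: nn_integral_count_space_indicator)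
      apply (rule nn_integral_mono)
      using F by (auto simp: indicator_def)
    finally have "ennreal (sum f F) \<le> ennreal r" using I by simp
    then show ?thesis using r0 by simp
  qed
  have summ: "f summable_on A"
    by (rule nonneg_bdd_above_summable_on) (use f0 le in \<open>auto simp: bdd_above_def\<close>)
  have sup: "ennreal (infsum f A) = (SUP F\<in>{F. finite F \<and> F \<subseteq> A}. ennreal (sum f F))"
    by (rule infsum_nonneg_is_SUPREMUM_ennreal[OF summ f0])
  have "ennreal (infsum f A) \<le> ennreal r" unfolding sup
    by (rule SUP_least) (use le r0 in auto)
  moreover have "ennreal r \<le> ennreal (infsum f A)"
  proof (cases "finite A")
    case True
    then have "ennreal r = ennreal (sum f A)" using I f0 by (simp add: nn_integral_count_space_finite)
    also have "\<dots> \<le> (SUP F\<in>{F. finite F \<and> F \<subseteq> A}. ennreal (sum f F))"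
      by (rule SUP_upper) (use True in auto)
    finally show ?thesis using sup by simp
  next
    case False
    let ?e = "from_nat_into A"
    have bij: "bij_betw ?e UNIV A" by (rule bij_betw_from_nat_into[OF cA False])
    have "ennreal r = (\<integral>\<^sup>+n. ennreal (f (?e n)) \<partial>count_space UNIV)"
      using I nn_integral_bij_count_space[OF bij, of "\<lambda>x. ennreal (f x)"] by simp
    also have "\<dots> = (\<Sum>n. ennreal (f (?e n)))" by (rule nn_integral_count_space_nat)
    also have "\<dots> = (SUP N. \<Sum>n<N. ennreal (f (?e n)))" by (rule suminf_eq_SUP)
    also have "\<dots> \<le> (SUP F\<in>{F. finite F \<and> F \<subseteq> A}. ennreal (sum f F))"
    proof (rule SUP_least)
      fix N
      have inj: "inj_on ?e {..<N}" using bij by (auto simp: bij_betw_def inj_on_def)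
      have sub: "?e ` {..<N} \<subseteq> A" using bij by (auto simp: bij_betw_def)
      have "(\<Sum>n<N. ennreal (f (?e n))) = ennreal (\<Sum>n<N. f (?e n))"
        using sub f0 by (intro sum_ennreal) auto
      also have "(\<Sum>n<N. f (?e n)) = sum f (?e ` {..<N})"
        by (rule sum.reindex[OF inj, symmetric, unfolded comp_def])
      also have "ennreal (sum f (?e ` {..<N})) \<le> (SUP F\<in>{F. finite F \<and> F \<subseteq> A}. ennreal (sum f F))"
        by (rule SUP_upper) (use sub in auto)
      finally show "(\<Sum>n<N. ennreal (f (?e n))) \<le> (SUP F\<in>{F. finite F \<and> F \<subseteq> A}. ennreal (sum f F))" .
    qed
    finally show ?thesis using sup by simp
  qed
  ultimately have "ennreal (infsum f A) = ennreal r" by (rule antisym)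
  then have "infsum f A = r" using r0 infsum_nonneg[of A f] f0 by simp
  then show ?thesis using summ by (metis has_sum_infsum)
qed

lemma aux3: "(Y::real) + 1 \<noteq> 0 \<Longrightarrow> 1 - 1 / (Y + 1) = Y / (Y + 1)"
  by (simp add: field_simps)

lemma W_prod: "W z ns = (\<Prod>i<length ns. z i ^ (ns ! i) / real (ns ! i))"
proof (induction ns arbitrary: z)
  case Nil then show ?case by simp
next
  case (Cons n ns)
  show ?case by (simp add: Cons.IH prod.lessThan_Suc_shift del: prod.lessThan_Suc)
qed

theorem theorem3:
  fixes k :: nat and u :: real
  assumes "k \<ge> 1" and "u \<ge> real k"
  shows "((\<lambda>ns :: nat list. \<Prod>i\<in>{1..k}.
             (1 - 1 / (u - real k + real i)) ^ (ns ! (i - 1)) / real (ns ! (i - 1)))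
          has_sum P k u)
         {ns. length ns = k \<and> sorted_wrt (>) ns \<and> (\<forall>n\<in>set ns. n > 0)}"
proof -
  define w where "w = u - real k"
  have w0: "w \<ge> 0" using assms unfolding w_def by simp
  have "Ser k (zf 0 w) = Psi k 0 w" by (rule Ser_Psi) (use w0 in auto)
  also have "\<dots> = ennreal (P k u)" using Psi_P[OF w0, of k] unfolding w_def by simp
  finally have S: "Ser k (zf 0 w) = ennreal (P k u)" .
  have P0: "P k u \<ge> 0" using Psi_P[OF w0, of k] unfolding w_def by simp
  have hs: "(W (zf 0 w) has_sum P k u) (Dec k)"
    by (rule bridge[OF countable_Dec _ P0 S[unfolded Ser_def]]) (intro W_nonneg zf_ge, simp_all add: w0)
  have zfe: "zf 0 w i = 1 - 1 / (u - real k + real (Suc i))" for i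
  proof -
    have X: "u - real k + real (Suc i) = w + real i + 1" by (simp add: w_def)
    have "(if i = 0 then w / (w + 1 + 0) else (w + real i + 0) / (w + real i + 1 + 0)) = 1 - 1 / (w + real i + 1)"
      using aux3[of "w + real i"] w0 by auto
    then show ?thesis unfolding X zf_def by simp
  qed
  have eq: "(\<Prod>i\<in>{1..k}. (1 - 1 / (u - real k + real i)) ^ (ns ! (i - 1)) / real (ns ! (i - 1)))
      = W (zf 0 w) ns" if "ns \<in> Dec k" for ns
  proof -
    have len: "length ns = k" using that by (simp add: Dec_def)
    have "{1..k} = Suc ` {..<k}" by (simp add: image_Suc_lessThan)
    then have "(\<Prod>i\<in>{1..k}. (1 - 1 / (u - real k + real i)) ^ (ns ! (i - 1)) / real (ns ! (i - 1)))
      = (\<Prod>i<k. (1 - 1 / (u - real k + real (Suc i))) ^ (ns ! i) / real (ns ! i))"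
      by (simp add: prod.reindex)
    also have "\<dots> = W (zf 0 w) ns" unfolding W_prod len zfe ..
    finally show ?thesis .
  qed
  have "((\<lambda>ns :: nat list. \<Prod>i\<in>{1..k}.
             (1 - 1 / (u - real k + real i)) ^ (ns ! (i - 1)) / real (ns ! (i - 1)))
          has_sum P k u) (Dec k)"
  proof -
    have "((\<lambda>ns :: nat list. \<Prod>i\<in>{1..k}.
             (1 - 1 / (u - real k + real i)) ^ (ns ! (i - 1)) / real (ns ! (i - 1)))
          has_sum P k u) (Dec k) \<longleftrightarrow> (W (zf 0 w) has_sum P k u) (Dec k)"
      by (rule has_sum_cong) (rule eq)
    with hs show ?thesis by simp
  qed
  then show ?thesis by (simp add: Dec_def)
qed


end
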